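(* Let $\Gamma=(V,E)$ be a simple graph of order $n$, size $m$ and maximum degree $\Delta$. Then the global offensive alliance number of $\Gamma$ satisfies $$\gamma_{a_o}(\Gamma)\ge \left\lceil\frac{(2n+\Delta+1)-\sqrt{(2n+\Delta+1)^{2}-8(2m+n)}}{4}\right\rceil$$ and the global strong offensive alliance number of $\Gamma$ satisfies $$\gamma_{\hat{a}_o}(\Gamma)\ge \left\lceil\frac{(2n+\Delta+2)-\sqrt{(2n+\Delta+2)^{2}-16(m+n)}}{4}\right\rceil.$$
   Context: For $S\subseteq V$ and $v\in V$, $N_S(v)=\{u\in S: u\sim v\}$ and $N_{V\setminus S}(v)=\{u\in V\setminus S: u\sim v\}$. A nonempty set $S\subseteq V$ is a global offensive alliance if $|N_S(v)|\ge |N_{V\setminus S}(v)|+1$ for every $v\in V\setminus S$, and a global strong offensive alliance if $|N_S(v)|\ge |N_{V\setminus S}(v)|+2$ for every $v\in V\setminus S$. $\gamma_{a_o}(\Gamma)$ (resp. $\gamma_{\hat a_o}(\Gamma)$) is the minimum cardinality of a global offensive (resp. global strong offensive) alliance. *)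

theory Defs
  imports Complex_Main
begin

definition simple_graph :: "'a set \<Rightarrow> ('a \<Rightarrow> 'a \<Rightarrow> bool) \<Rightarrow> bool" where
  "simple_graph V E \<longleftrightarrow> finite V \<and> (\<forall>u v. E u v \<longrightarrow> u \<in> V \<and> v \<in> V)
     \<and> (\<forall>u v. E u v \<longrightarrow> E v u) \<and> (\<forall>v. \<not> E v v)"

definition nbhd_in :: "('a \<Rightarrow> 'a \<Rightarrow> bool) \<Rightarrow> 'a set \<Rightarrow> 'a \<Rightarrow> 'a set" where
  "nbhd_in E S v = {u \<in> S. E u v}"

definition degree :: "'a set \<Rightarrow> ('a \<Rightarrow> 'a \<Rightarrow> bool) \<Rightarrow> 'a \<Rightarrow> nat" where
  "degree V E v = card (nbhd_in E V v)"

definition max_degree :: "'a set \<Rightarrow> ('a \<Rightarrow> 'a \<Rightarrow> bool) \<Rightarrow> nat" where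
  "max_degree V E = Max (degree V E ` V)"

definition edges :: "'a set \<Rightarrow> ('a \<Rightarrow> 'a \<Rightarrow> bool) \<Rightarrow> 'a set set" where
  "edges V E = {{u, v} | u v. u \<in> V \<and> v \<in> V \<and> E u v}"

definition global_offensive_alliance :: "'a set \<Rightarrow> ('a \<Rightarrow> 'a \<Rightarrow> bool) \<Rightarrow> 'a set \<Rightarrow> bool" where
  "global_offensive_alliance V E S \<longleftrightarrow> S \<noteq> {} \<and> S \<subseteq> V \<and>
     (\<forall>v \<in> V - S. card (nbhd_in E S v) \<ge> card (nbhd_in E (V - S) v) + 1)"

definition global_strong_offensive_alliance :: "'a set \<Rightarrow> ('a \<Rightarrow> 'a \<Rightarrow> bool) \<Rightarrow> 'a set \<Rightarrow> bool" where
  "global_strong_offensive_alliance V E S \<longleftrightarrow> S \<noteq> {} \<and> S \<subseteq> V \<and>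
     (\<forall>v \<in> V - S. card (nbhd_in E S v) \<ge> card (nbhd_in E (V - S) v) + 2)"

definition goa_number :: "'a set \<Rightarrow> ('a \<Rightarrow> 'a \<Rightarrow> bool) \<Rightarrow> nat" where
  "goa_number V E = Min (card ` {S. global_offensive_alliance V E S})"

definition gsoa_number :: "'a set \<Rightarrow> ('a \<Rightarrow> 'a \<Rightarrow> bool) \<Rightarrow> nat" where
  "gsoa_number V E = Min (card ` {S. global_strong_offensive_alliance V E S})"

end

theory Submission
  imports Defs
begin

lemma handshake:
  assumes g: "simple_graph V E"
  shows "(\<Sum>v\<in>V. degree V E v) = 2 * card (edges V E)"
proof -
  have fin: "finite V" using g by (simp add: simple_graph_def)
  define P where "P = Sigma V (\<lambda>v. nbhd_in E V v)"
  have finP: "finite P" unfolding P_def nbhd_in_def using fin by auto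
  have "card P = (\<Sum>v\<in>V. degree V E v)"
    unfolding P_def degree_def using fin by (subst card_SigmaI) (auto simp: nbhd_in_def)
  moreover have finE: "finite (edges V E)"
  proof -
    have "edges V E \<subseteq> (\<lambda>(u,v). {u,v}) ` (V \<times> V)" unfolding edges_def by auto
    thus ?thesis using fin by (meson finite_SigmaI finite_imageI finite_subset)
  qed
  moreover have "P = (\<Union>e\<in>edges V E. {p\<in>P. {fst p, snd p} = e})"
  proof
    show "P \<subseteq> (\<Union>e\<in>edges V E. {p\<in>P. {fst p, snd p} = e})"
    proof
      fix p assume p: "p \<in> P"
      then obtain a b where ab: "p = (a,b)" "a \<in> V" "b \<in> V" "E b a" unfolding P_def nbhd_in_def by auto
      hence "E a b" using g unfolding simple_graph_def by blast
      hence "{a,b} \<in> edges V E" using ab unfolding edges_def by blast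
      thus "p \<in> (\<Union>e\<in>edges V E. {p\<in>P. {fst p, snd p} = e})" using p ab by auto
    qed
  qed auto
  moreover have "\<forall>e\<in>edges V E. card {p\<in>P. {fst p, snd p} = e} = 2"
  proof
    fix e assume "e \<in> edges V E"
    then obtain u v where e: "e = {u,v}" "u \<in> V" "v \<in> V" "E u v" unfolding edges_def by auto
    have "u \<noteq> v" using e g by (auto simp: simple_graph_def)
    have "{p\<in>P. {fst p, snd p} = e} = {(u,v),(v,u)}"
      using e g unfolding P_def nbhd_in_def simple_graph_def by (auto simp: doubleton_eq_iff)
    thus "card {p\<in>P. {fst p, snd p} = e} = 2" using \<open>u \<noteq> v\<close> by simp
  qed
  ultimately show ?thesis
  proof -
    assume c: "card P = (\<Sum>v\<in>V. degree V E v)" and fe: "finite (edges V E)"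
      and pu: "P = (\<Union>e\<in>edges V E. {p\<in>P. {fst p, snd p} = e})"
      and c2: "\<forall>e\<in>edges V E. card {p\<in>P. {fst p, snd p} = e} = 2"
    have "card P = (\<Sum>e\<in>edges V E. card {p\<in>P. {fst p, snd p} = e})"
      by (subst pu, rule card_UN_disjoint) (use fe finP in auto)
    also have "\<dots> = (\<Sum>e\<in>edges V E. 2)" using c2 by simp
    finally show ?thesis using c by simp
  qed
qed

lemma deg_le_max:
  assumes g: "simple_graph V E" and "v \<in> V"
  shows "degree V E v \<le> max_degree V E"
  using assms unfolding max_degree_def simple_graph_def by (auto intro: Max_ge)

lemma alliance_ineq:
  assumes g: "simple_graph V E" and S: "S \<subseteq> V"
    and al: "\<forall>v\<in>V - S. card (nbhd_in E S v) \<ge> card (nbhd_in E (V - S) v) + t"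
  shows "2 * card (edges V E) + t * card (V - S) \<le> 2 * card S * card (V - S) + card S * max_degree V E"
proof -
  have fin: "finite V" using g by (simp add: simple_graph_def)
  have finS: "finite S" using fin S finite_subset by blast
  have split: "(\<Sum>v\<in>V. degree V E v) = (\<Sum>v\<in>S. degree V E v) + (\<Sum>v\<in>V-S. degree V E v)"
    using fin S by (metis add.commute sum.subset_diff)
  have s1: "(\<Sum>v\<in>S. degree V E v) \<le> card S * max_degree V E"
    using sum_bounded_above[of S "degree V E" "max_degree V E"] deg_le_max[OF g] S by auto
  have degsplit: "degree V E v = card (nbhd_in E S v) + card (nbhd_in E (V - S) v)" if "v \<in> V" for v
  proof -
    have "nbhd_in E V v = nbhd_in E S v \<union> nbhd_in E (V - S) v" using S by (auto simp: nbhd_in_def)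
    moreover have "finite (nbhd_in E S v)" "finite (nbhd_in E (V - S) v)"
      using fin finS by (auto simp: nbhd_in_def)
    ultimately show ?thesis unfolding degree_def by (subst card_Un_disjoint[symmetric]) (auto simp: nbhd_in_def)
  qed
  have "(\<Sum>v\<in>V-S. degree V E v + t) \<le> (\<Sum>v\<in>V-S. 2 * card S)"
  proof (rule sum_mono)
    fix v assume v: "v \<in> V - S"
    have "card (nbhd_in E S v) \<le> card S" using finS by (auto simp: nbhd_in_def intro: card_mono)
    thus "degree V E v + t \<le> 2 * card S" using degsplit[of v] al v by force
  qed
  hence "(\<Sum>v\<in>V-S. degree V E v) + t * card (V - S) \<le> 2 * card S * card (V - S)"
    by (simp add: sum.distrib mult.commute)
  thus ?thesis using split s1 handshake[OF g] by linarith
qed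

lemma root_bound:
  fixes s B C :: real
  assumes "2*s^2 - B*s + C \<le> 0"
  shows "(B - sqrt (B^2 - 8*C))/4 \<le> s"
proof -
  have "(4*s - B)^2 \<le> B^2 - 8*C" using assms by (simp add: power2_eq_square algebra_simps)
  hence "sqrt ((4*s - B)^2) \<le> sqrt (B^2 - 8*C)" using real_sqrt_le_mono by blast
  hence "\<bar>4*s - B\<bar> \<le> sqrt (B^2 - 8*C)" by simp
  thus ?thesis by (simp add: abs_le_iff)
qed

lemma ceil_bound:
  fixes x :: real and k :: nat
  assumes "x \<le> real k"
  shows "of_int \<lceil>x\<rceil> \<le> real k"
proof -
  have "\<lceil>x\<rceil> \<le> int k" using assms by (simp add: ceiling_le_iff)
  thus ?thesis by linarith
qed

theorem theorem7:
  fixes V :: "'a set" and E :: "'a \<Rightarrow> 'a \<Rightarrow> bool"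
  assumes "simple_graph V E" and "V \<noteq> {}"
  defines "n \<equiv> real (card V)" and "m \<equiv> real (card (edges V E))"
      and "\<Delta> \<equiv> real (max_degree V E)"
  shows "real (goa_number V E) \<ge>
           of_int \<lceil>((2*n + \<Delta> + 1) - sqrt ((2*n + \<Delta> + 1)^2 - 8*(2*m + n))) / 4\<rceil>
       \<and> real (gsoa_number V E) \<ge>
           of_int \<lceil>((2*n + \<Delta> + 2) - sqrt ((2*n + \<Delta> + 2)^2 - 16*(m + n))) / 4\<rceil>"
proof -
  have g: "simple_graph V E" by fact
  have fin: "finite V" using g by (simp add: simple_graph_def)
  have gen: "real (card S) \<ge> ((2*n + \<Delta> + t) - sqrt ((2*n + \<Delta> + t)^2 - 8*(2*m + t*n))) / 4"
    if S: "S \<subseteq> V" and al: "\<forall>v\<in>V - S. card (nbhd_in E S v) \<ge> card (nbhd_in E (V - S) v) + t" for S t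
  proof -
    have i: "2 * card (edges V E) + t * card (V - S) \<le> 2 * card S * card (V - S) + card S * max_degree V E"
      by (rule alliance_ineq[OF g S al])
    have cd: "card (V - S) = card V - card S" "card S \<le> card V"
      using S fin by (auto simp: card_Diff_subset finite_subset card_mono)
    have "real (2 * card (edges V E) + t * card (V - S)) \<le> real (2 * card S * card (V - S) + card S * max_degree V E)"
      using i by linarith
    hence "2*m + real t*(n - real (card S)) \<le> 2 * real (card S) * (n - real (card S)) + real (card S) * \<Delta>"
      unfolding m_def n_def \<Delta>_def using cd by (simp add: of_nat_diff)
    hence "2*(real (card S))^2 - (2*n + \<Delta> + real t)*real (card S) + (2*m + real t*n) \<le> 0"
      by (simp add: power2_eq_square algebra_simps)
    thus ?thesis using root_bound by blast
  qed
  have goa: "global_offensive_alliance V E V" and gsoa: "global_strong_offensive_alliance V E V"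
    using assms(2) by (auto simp: global_offensive_alliance_def global_strong_offensive_alliance_def)
  have finA: "finite {S. global_offensive_alliance V E S}" "finite {S. global_strong_offensive_alliance V E S}"
    using fin by (auto simp: global_offensive_alliance_def global_strong_offensive_alliance_def
        intro: finite_subset[of _ "Pow V"])
  have "goa_number V E \<in> card ` {S. global_offensive_alliance V E S}"
    unfolding goa_number_def using finA goa by (intro Min_in) auto
  then obtain S where S: "global_offensive_alliance V E S" "goa_number V E = card S" by auto
  have "gsoa_number V E \<in> card ` {S. global_strong_offensive_alliance V E S}"
    unfolding gsoa_number_def using finA gsoa by (intro Min_in) auto
  then obtain T where T: "global_strong_offensive_alliance V E T" "gsoa_number V E = card T" by auto
  have 1: "real (card S) \<ge> ((2*n + \<Delta> + real 1) - sqrt ((2*n + \<Delta> + real 1)^2 - 8*(2*m + real 1*n))) / 4"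
    using S(1) by (intro gen) (auto simp: global_offensive_alliance_def)
  have 2: "real (card T) \<ge> ((2*n + \<Delta> + real 2) - sqrt ((2*n + \<Delta> + real 2)^2 - 8*(2*m + real 2*n))) / 4"
    using T(1) by (intro gen) (auto simp: global_strong_offensive_alliance_def)
  have e: "8*(2*m + real 2*n) = 16*(m+n)" by simp
  show ?thesis using ceil_bound[OF 1] ceil_bound[OF 2[unfolded e]] S(2) T(2) by simp
qed

end
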